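(* Let $(R,\cdot,\alpha)$ be a non-unital hom-associative ring, let $\sigma,\delta\colon R\to R$ be left $R$-additive maps, extend $\alpha$ homogeneously to $R[X;\sigma,\delta]$, and suppose $R[X;\sigma,\delta]$ is hom-associative with this twisting map. Then for all $a,b,c\in R$: $$(a\cdot b)\cdot\delta(\alpha(c))=(a\cdot b)\cdot\alpha(\delta(c)),\qquad (a\cdot b)\cdot\sigma(\alpha(c))=(a\cdot b)\cdot\alpha(\sigma(c)),$$ $$\alpha(a)\cdot\delta(b\cdot c)=\alpha(a)\cdot\big(\delta(b)\cdot c+\sigma(b)\cdot\delta(c)\big),\qquad \alpha(a)\cdot\sigma(b\cdot c)=\alpha(a)\cdot\big(\sigma(b)\cdot\sigma(c)\big).$$
   Context: A hom-associative ring is a triple $(R,\cdot,\alpha)$ where $R$ is an abelian group with a biadditive (not necessarily associative or unital) multiplication $\cdot$ and an additive map $\alpha\colon R\to R$ satisfying $\alpha(a)\cdot(b\cdot c)=(a\cdot b)\cdot\alpha(c)$ for all $a,b,c$. $\mathbb{N}$ denotes the non-negative integers. A map $\beta\colon R\to R$ is left $R$-additive if $r\cdot\beta(s+t)=r\cdot(\beta(s)+\beta(t))$ for all $r,s,t\in R$. For $m\in\mathbb{N}$ and $0\le i\le m$, $\pi_i^m\colon R\to R$ denotes the sum of all $\binom{m}{i}$ compositions of $i$ copies of $\sigma$ and $m-i$ copies of $\delta$ in arbitrary order ($\pi_0^0=\mathrm{id}_R$), and $\pi_i^m:=0$ if $i<0$ or $i>m$. The non-unital, non-associative Ore extension $R[X;\sigma,\delta]$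 is the set of formal sums $\sum_{i\in\mathbb{N}}a_iX^i$ with $a_i\in R$, finitely many nonzero, with coefficientwise addition and the distributive multiplication determined by $aX^m\cdot bX^n=\sum_{i\in\mathbb{N}}(a\cdot\pi_i^m(b))X^{i+n}$. The homogeneous extension of $\alpha$ is $\alpha\left(\sum_ia_iX^i\right):=\sum_i\alpha(a_i)X^i$. *)

theory Defs
  imports Main
begin

definition biadditive :: "('a::ab_group_add \<Rightarrow> 'a \<Rightarrow> 'a) \<Rightarrow> bool" where
  "biadditive m \<longleftrightarrow> (\<forall>a b c. m (a + b) c = m a c + m b c) \<and> (\<forall>a b c. m a (b + c) = m a b + m a c)"

definition additive_map :: "('a::ab_group_add \<Rightarrow> 'a) \<Rightarrow> bool" where
  "additive_map f \<longleftrightarrow> (\<forall>a b. f (a + b) = f a + f b)"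

definition hom_assoc :: "('a \<Rightarrow> 'a \<Rightarrow> 'a) \<Rightarrow> ('a \<Rightarrow> 'a) \<Rightarrow> bool" where
  "hom_assoc m \<alpha> \<longleftrightarrow> (\<forall>a b c. m (\<alpha> a) (m b c) = m (m a b) (\<alpha> c))"

definition hom_assoc_ring :: "('a::ab_group_add \<Rightarrow> 'a \<Rightarrow> 'a) \<Rightarrow> ('a \<Rightarrow> 'a) \<Rightarrow> bool" where
  "hom_assoc_ring m \<alpha> \<longleftrightarrow> biadditive m \<and> additive_map \<alpha> \<and> hom_assoc m \<alpha>"

definition left_R_additive :: "('a::ab_group_add \<Rightarrow> 'a \<Rightarrow> 'a) \<Rightarrow> ('a \<Rightarrow> 'a) \<Rightarrow> bool" where
  "left_R_additive m \<beta> \<longleftrightarrow> (\<forall>r s t. m r (\<beta> (s + t)) = m r (\<beta> s + \<beta> t))"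

definition word_comp :: "('a \<Rightarrow> 'a) \<Rightarrow> ('a \<Rightarrow> 'a) \<Rightarrow> bool list \<Rightarrow> 'a \<Rightarrow> 'a" where
  "word_comp \<sigma> \<delta> w = foldr (\<lambda>b f. (if b then \<sigma> else \<delta>) \<circ> f) w id"

text \<open>pi i m: sum of all compositions of i copies of \<sigma> and m - i copies of \<delta>
  (zero if i > m; the identity for i = m = 0).\<close>
definition ore_pi :: "('a::ab_group_add \<Rightarrow> 'a) \<Rightarrow> ('a \<Rightarrow> 'a) \<Rightarrow> nat \<Rightarrow> nat \<Rightarrow> 'a \<Rightarrow> 'a" where
  "ore_pi \<sigma> \<delta> i m x =
     (\<Sum>w\<in>{w. length w = m \<and> length (filter id w) = i}. word_comp \<sigma> \<delta> w x)"

text \<open>Elements of R[X;\<sigma>,\<delta>] are represented by coefficient functions nat \<Rightarrow> 'a with finite support.\<close>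
definition supp :: "(nat \<Rightarrow> 'a::zero) \<Rightarrow> nat set" where
  "supp p = {i. p i \<noteq> 0}"

definition is_ore_poly :: "(nat \<Rightarrow> 'a::zero) \<Rightarrow> bool" where
  "is_ore_poly p \<longleftrightarrow> finite (supp p)"

text \<open>Multiplication: the distributive extension of
  aX^m \<cdot> bX^n = \<Sum>_i (a \<cdot> pi_i^m(b)) X^(i+n).\<close>
definition ore_mult :: "('a::ab_group_add \<Rightarrow> 'a \<Rightarrow> 'a) \<Rightarrow> ('a \<Rightarrow> 'a) \<Rightarrow> ('a \<Rightarrow> 'a)
    \<Rightarrow> (nat \<Rightarrow> 'a) \<Rightarrow> (nat \<Rightarrow> 'a) \<Rightarrow> nat \<Rightarrow> 'a" where
  "ore_mult m \<sigma> \<delta> p q k =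
     (\<Sum>i\<in>supp p. \<Sum>j\<in>supp q.
        if j \<le> k then m (p i) (ore_pi \<sigma> \<delta> (k - j) i (q j)) else 0)"

definition ore_alpha :: "('a \<Rightarrow> 'a) \<Rightarrow> (nat \<Rightarrow> 'a) \<Rightarrow> nat \<Rightarrow> 'a" where
  "ore_alpha \<alpha> p = (\<lambda>i. \<alpha> (p i))"

definition ore_hom_assoc :: "('a::ab_group_add \<Rightarrow> 'a \<Rightarrow> 'a) \<Rightarrow> ('a \<Rightarrow> 'a) \<Rightarrow> ('a \<Rightarrow> 'a) \<Rightarrow> ('a \<Rightarrow> 'a) \<Rightarrow> bool" where
  "ore_hom_assoc m \<alpha> \<sigma> \<delta> \<longleftrightarrow>
     (\<forall>p q r. is_ore_poly p \<longrightarrow> is_ore_poly q \<longrightarrow> is_ore_poly r \<longrightarrow>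
        ore_mult m \<sigma> \<delta> (ore_alpha \<alpha> p) (ore_mult m \<sigma> \<delta> q r)
        = ore_mult m \<sigma> \<delta> (ore_mult m \<sigma> \<delta> p q) (ore_alpha \<alpha> r))"

end

theory Submission
  imports Defs
begin

lemma pi0: "ore_pi \<sigma> \<delta> n 0 x = (if n = 0 then x else 0)"
proof -
  have "{w::bool list. length w = 0 \<and> length (filter id w) = n} = (if n = 0 then {[]} else {})"
    by auto
  then show ?thesis by (simp add: ore_pi_def word_comp_def)
qed

lemma pi1: "ore_pi \<sigma> \<delta> n (Suc 0) x = (if n = 0 then \<delta> x else if n = 1 then \<sigma> x else 0)"
proof -
  have "{w::bool list. length w = Suc 0 \<and> length (filter id w) = n} =
     (if n = 0 then {[False]} else if n = 1 then {[True]} else {})"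
    by (auto simp: length_Suc_conv split: if_splits)
  then show ?thesis by (simp add: ore_pi_def word_comp_def)
qed

lemma m_zero_left: "biadditive m \<Longrightarrow> m 0 x = 0"
  unfolding biadditive_def by (metis add_cancel_right_right add_0)

lemma m_zero_right: "biadditive m \<Longrightarrow> m x 0 = 0"
  unfolding biadditive_def by (metis add_cancel_right_right add_0)

lemma m_beta_zero: "left_R_additive m \<beta> \<Longrightarrow> biadditive m \<Longrightarrow> m r (\<beta> 0) = 0"
  unfolding left_R_additive_def biadditive_def
  by (metis add_0 add_cancel_right_right)

definition deg1 :: "(nat \<Rightarrow> 'a::zero) \<Rightarrow> bool" where
  "deg1 p \<longleftrightarrow> (\<forall>i\<ge>2. p i = 0)"

lemma deg1_supp: "deg1 p \<Longrightarrow> supp p \<subseteq> {0, Suc 0}"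
  unfolding deg1_def supp_def
proof
  fix x assume "\<forall>i\<ge>2. p i = 0" "x \<in> {i. p i \<noteq> 0}"
  then have "x < 2" by (metis mem_Collect_eq not_le)
  then show "x \<in> {0, Suc 0}" by auto
qed

lemma deg1_poly: "deg1 p \<Longrightarrow> is_ore_poly p"
  unfolding is_ore_poly_def using deg1_supp finite_subset by blast

lemma mult_formula:
  assumes B: "biadditive m" and S: "left_R_additive m \<sigma>" and D: "left_R_additive m \<delta>"
    and p: "deg1 p" and q: "deg1 q"
  shows "ore_mult m \<sigma> \<delta> p q k =
     (\<Sum>i\<in>{0, Suc 0}. \<Sum>j\<in>{0, Suc 0}. if j \<le> k then m (p i) (ore_pi \<sigma> \<delta> (k - j) i (q j)) else 0)"
proof -
  have z: "m (p i) (ore_pi \<sigma> \<delta> (k - j) i (q j)) = 0"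
    if "i \<in> {0, Suc 0}" "i \<notin> supp p \<or> j \<notin> supp q" for i j
  proof (cases "i \<in> supp p")
    case False
    then show ?thesis using m_zero_left[OF B] by (simp add: supp_def)
  next
    case True
    then have "q j = 0" using that by (simp add: supp_def)
    then show ?thesis using that m_zero_right[OF B] m_beta_zero[OF S B] m_beta_zero[OF D B]
      by (auto simp: pi0 pi1)
  qed
  have "ore_mult m \<sigma> \<delta> p q k =
     (\<Sum>i\<in>supp p. \<Sum>j\<in>{0, Suc 0}. if j \<le> k then m (p i) (ore_pi \<sigma> \<delta> (k - j) i (q j)) else 0)"
    unfolding ore_mult_def
    apply (rule sum.cong[OF refl])
    apply (rule sum.mono_neutral_left)
    using deg1_supp[OF q] deg1_supp[OF p] z by auto
  also have "(\<Sum>i\<in>supp p. \<Sum>j\<in>{0, Suc 0}. if j \<le> k then m (p i) (ore_pi \<sigma> \<delta> (k - j) i (q j)) else 0)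
      = (\<Sum>i\<in>{0, Suc 0}. \<Sum>j\<in>{0, Suc 0}. if j \<le> k then m (p i) (ore_pi \<sigma> \<delta> (k - j) i (q j)) else 0)"
    apply (rule sum.mono_neutral_left)
    using deg1_supp[OF p] m_zero_left[OF B] by (auto simp: supp_def)
  finally show ?thesis .
qed

theorem mainTheorem6:
  fixes m :: "'a::ab_group_add \<Rightarrow> 'a \<Rightarrow> 'a" and \<alpha> \<sigma> \<delta> :: "'a \<Rightarrow> 'a"
  assumes "hom_assoc_ring m \<alpha>"
    and "left_R_additive m \<sigma>" and "left_R_additive m \<delta>"
    and "ore_hom_assoc m \<alpha> \<sigma> \<delta>"
  shows "\<forall>a b c.
      m (m a b) (\<delta> (\<alpha> c)) = m (m a b) (\<alpha> (\<delta> c)) \<and>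
      m (m a b) (\<sigma> (\<alpha> c)) = m (m a b) (\<alpha> (\<sigma> c)) \<and>
      m (\<alpha> a) (\<delta> (m b c)) = m (\<alpha> a) (m (\<delta> b) c + m (\<sigma> b) (\<delta> c)) \<and>
      m (\<alpha> a) (\<sigma> (m b c)) = m (\<alpha> a) (m (\<sigma> b) (\<sigma> c))"
proof -
  have B: "biadditive m" and A: "additive_map \<alpha>" and H: "hom_assoc m \<alpha>"
    using assms(1) by (auto simp: hom_assoc_ring_def)
  note S = assms(2) and D = assms(3)
  have a0: "\<alpha> 0 = 0" using A unfolding additive_map_def by (metis add_0 add_cancel_right_right)
  have HA: "m (\<alpha> x) (m y z) = m (m x y) (\<alpha> z)" for x y z using H by (simp add: hom_assoc_def)
  have Badd: "m x (y + z) = m x y + m x z" for x y z using B by (simp add: biadditive_def)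
  note zs = m_zero_left[OF B] m_zero_right[OF B] m_beta_zero[OF S B] m_beta_zero[OF D B] pi0 pi1
  define mono0 :: "'a \<Rightarrow> nat \<Rightarrow> 'a" where "mono0 x = (\<lambda>i. if i = 0 then x else 0)" for x
  define mono1 :: "'a \<Rightarrow> nat \<Rightarrow> 'a" where "mono1 x = (\<lambda>i. if i = 1 then x else 0)" for x
  have d0: "deg1 (mono0 x)" and d1: "deg1 (mono1 x)" for x by (auto simp: deg1_def mono0_def mono1_def)
  have al0: "ore_alpha \<alpha> (mono0 x) = mono0 (\<alpha> x)" for x
    by (auto simp: ore_alpha_def mono0_def a0)
  have MF: "ore_mult m \<sigma> \<delta> p q k =
     (\<Sum>i\<in>{0, Suc 0}. \<Sum>j\<in>{0, Suc 0}. if j \<le> k then m (p i) (ore_pi \<sigma> \<delta> (k - j) i (q j)) else 0)"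
    if "deg1 p" "deg1 q" for p q k using mult_formula[OF B S D that] .
  have HP: "ore_mult m \<sigma> \<delta> (ore_alpha \<alpha> p) (ore_mult m \<sigma> \<delta> q r)
        = ore_mult m \<sigma> \<delta> (ore_mult m \<sigma> \<delta> p q) (ore_alpha \<alpha> r)"
    if "deg1 p" "deg1 q" "deg1 r" for p q r
    using assms(4) deg1_poly that unfolding ore_hom_assoc_def by blast
  have caseA: "m (\<alpha> a) (m b (\<delta> c)) = m (m a b) (\<delta> (\<alpha> c)) \<and>
     m (\<alpha> a) (m b (\<sigma> c)) = m (m a b) (\<sigma> (\<alpha> c))" for a b c
  proof -
    define qrA where "qrA = (\<lambda>k::nat. if k = 0 then m b (\<delta> c) else if k = 1 then m b (\<sigma> c) else 0)"
    define pqA where "pqA = mono1 (m a b)"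
    have qrA: "ore_mult m \<sigma> \<delta> (mono1 b) (mono0 c) = qrA"
      by (rule ext, subst MF[OF d1 d0]) (auto simp: zs mono0_def mono1_def qrA_def)
    have pqA: "ore_mult m \<sigma> \<delta> (mono0 a) (mono1 b) = pqA"
      by (rule ext, subst MF[OF d0 d1]) (auto simp: zs mono0_def mono1_def pqA_def)
    have dqrA: "deg1 qrA" and dpqA: "deg1 pqA" by (auto simp: deg1_def qrA_def pqA_def mono1_def)
    have EA: "ore_mult m \<sigma> \<delta> (mono0 (\<alpha> a)) qrA = ore_mult m \<sigma> \<delta> pqA (mono0 (\<alpha> c))"
      using HP[OF d0 d1 d0, of a b c] by (simp add: qrA pqA al0)
    have A0: "m (\<alpha> a) (m b (\<delta> c)) = m (m a b) (\<delta> (\<alpha> c))"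
      using fun_cong[OF EA, of 0] unfolding MF[OF d0 dqrA] MF[OF dpqA d0]
      by (simp add: zs mono0_def mono1_def pqA_def qrA_def)
    have A1: "m (\<alpha> a) (m b (\<sigma> c)) = m (m a b) (\<sigma> (\<alpha> c))"
      using fun_cong[OF EA, of 1] unfolding MF[OF d0 dqrA] MF[OF dpqA d0]
      by (simp add: zs mono0_def mono1_def pqA_def qrA_def)
    show ?thesis using A0 A1 by simp
  qed
  have I1: "m (m x y) (\<delta> (\<alpha> z)) = m (m x y) (\<alpha> (\<delta> z))" for x y z
    using caseA[of x y z] HA[of x y "\<delta> z"] by simp
  have I2: "m (m x y) (\<sigma> (\<alpha> z)) = m (m x y) (\<alpha> (\<sigma> z))" for x y z
    using caseA[of x y z] HA[of x y "\<sigma> z"] by simp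
  have caseB: "m (\<alpha> a) (\<delta> (m b c)) = m (m a (\<delta> b)) (\<alpha> c) + m (m a (\<sigma> b)) (\<delta> (\<alpha> c)) \<and>
     m (\<alpha> a) (\<sigma> (m b c)) = m (m a (\<sigma> b)) (\<sigma> (\<alpha> c))" for a b c
  proof -
    define pqB where "pqB = (\<lambda>k::nat. if k = 0 then m a (\<delta> b) else if k = 1 then m a (\<sigma> b) else 0)"
    define qrB where "qrB = mono0 (m b c)"
    have qrB: "ore_mult m \<sigma> \<delta> (mono0 b) (mono0 c) = qrB"
      by (rule ext, subst MF[OF d0 d0]) (auto simp: zs mono0_def mono1_def qrB_def)
    have pqB: "ore_mult m \<sigma> \<delta> (mono1 a) (mono0 b) = pqB"
      by (rule ext, subst MF[OF d1 d0]) (auto simp: zs mono0_def mono1_def pqB_def)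
    have dqrB: "deg1 qrB" and dpqB: "deg1 pqB" by (auto simp: deg1_def qrB_def pqB_def mono0_def)
    have al1: "ore_alpha \<alpha> (mono1 a) = mono1 (\<alpha> a)"
      by (auto simp: ore_alpha_def mono1_def a0)
    have EB: "ore_mult m \<sigma> \<delta> (mono1 (\<alpha> a)) qrB = ore_mult m \<sigma> \<delta> pqB (mono0 (\<alpha> c))"
      using HP[OF d1 d0 d0, of a b c] by (simp add: qrB pqB al0 al1)
    have B0: "m (\<alpha> a) (\<delta> (m b c)) = m (m a (\<delta> b)) (\<alpha> c) + m (m a (\<sigma> b)) (\<delta> (\<alpha> c))"
      using fun_cong[OF EB, of 0] unfolding MF[OF d1 dqrB] MF[OF dpqB d0]
      by (simp add: zs mono0_def mono1_def pqB_def qrB_def)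
    have B1: "m (\<alpha> a) (\<sigma> (m b c)) = m (m a (\<sigma> b)) (\<sigma> (\<alpha> c))"
      using fun_cong[OF EB, of 1] unfolding MF[OF d1 dqrB] MF[OF dpqB d0]
      by (simp add: zs mono0_def mono1_def pqB_def qrB_def)
    show ?thesis using B0 B1 by simp
  qed
  show ?thesis
  proof (intro allI)
    fix a b c
    have "m (\<alpha> a) (\<delta> (m b c)) = m (\<alpha> a) (m (\<delta> b) c) + m (\<alpha> a) (m (\<sigma> b) (\<delta> c))"
      using caseB[of a b c] I1[of a "\<sigma> b" c] HA[of a "\<delta> b" c] HA[of a "\<sigma> b" "\<delta> c"] by simp
    moreover have "m (\<alpha> a) (\<sigma> (m b c)) = m (\<alpha> a) (m (\<sigma> b) (\<sigma> c))"
      using caseB[of a b c] I2[of a "\<sigma> b" c] HA[of a "\<sigma> b" "\<sigma> c"] by simp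
    ultimately show "m (m a b) (\<delta> (\<alpha> c)) = m (m a b) (\<alpha> (\<delta> c)) \<and>
      m (m a b) (\<sigma> (\<alpha> c)) = m (m a b) (\<alpha> (\<sigma> c)) \<and>
      m (\<alpha> a) (\<delta> (m b c)) = m (\<alpha> a) (m (\<delta> b) c + m (\<sigma> b) (\<delta> c)) \<and>
      m (\<alpha> a) (\<sigma> (m b c)) = m (\<alpha> a) (m (\<sigma> b) (\<sigma> c))"
      using I1 I2 Badd by simp
  qed
qed

end
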